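(* Let $G=(V,E)$ be a finite graph with $V\neq\emptyset$, let $f$ be a weight function of one of the two types described in the context (with its associated integer $k$), let $g(S)=f(S)/|S|$, and let $\epsilon\ge 0$. Let $S^p$ be the vertex set returned by the parallel peeling algorithm described in the context, and let $S^*$ be a nonempty vertex set maximizing $g$ over all nonempty subsets of $V$. Then $g(S^p)\ge \dfrac{g(S^* )}{k(1+\epsilon)}$.
   Context: Let $G=(V,E)$ be a (directed or undirected) graph. For $S\subseteq V$, $G[S]=(S,E[S])$ is the induced subgraph, $E[S]=\{(u,v)\in E: u,v\in S\}$. Two types of weight functions $f:2^V\to\mathbb{R}_{\ge 0}$ are considered. (Type A, with $k=2$; covers the metrics DG, DW, FD): fixed numbers $a_i\ge 0$ for each vertex $u_i$ and $c_{ij}\ge 0$ for each edge $(u_i,u_j)\in E$ are given, and $f(S)=\sum_{u_i\in S}a_i+\sum_{(u_i,u_j)\in E[S]}c_{ij}$. (Type B, with $k\ge 3$ the clique size; covers TDS for $k=3$ and $k$-clique densest subgraph for general $k$): $f(S)$ is the number of $k$-cliques of $G[S]$. The density is $g(S)=f(S)/|S|$ for nonempty $S$. The peeling weight of $u\in S$ is $w_u(S)=f(S)-f(S\setminus\{u\})$. Parallel peeling algorithm with parameter $\epsilon\ge 0$: set $S_0=V$, $i=1$; while $S_{i-1}\neq\emptyset$: let $U=\{u\in S_{i-1}: w_u(S_{i-1})\le k(1+\epsilon)\,g(S_{i-1})\}$, set $S_i=S_{i-1}\setminus U$, and increase $i$ by one. The algorithm outputs $S^p=\arg\max_{S_i}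 g(S_i)$ over the nonempty sets $S_i$ produced. *)

theory Defs
  imports Main "HOL.Real"
begin

text \<open>Graphs: finite vertex set V and edge set E of ordered pairs with E \<subseteq> V \<times> V.
  An undirected edge is represented by a single orientation.\<close>

definition typeA_weight :: "('a \<times> 'a) set \<Rightarrow> ('a \<Rightarrow> real) \<Rightarrow> ('a \<times> 'a \<Rightarrow> real) \<Rightarrow> 'a set \<Rightarrow> real" where
  "typeA_weight E a c S = (\<Sum>u\<in>S. a u) + (\<Sum>e\<in>E \<inter> (S \<times> S). c e)"

definition is_clique :: "('a \<times> 'a) set \<Rightarrow> 'a set \<Rightarrow> bool" where
  "is_clique E C \<longleftrightarrow> (\<forall>u\<in>C. \<forall>v\<in>C. u \<noteq> v \<longrightarrow> (u, v) \<in> E \<or> (v, u) \<in> E)"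

definition kcliques :: "('a \<times> 'a) set \<Rightarrow> nat \<Rightarrow> 'a set \<Rightarrow> 'a set set" where
  "kcliques E k S = {C. C \<subseteq> S \<and> card C = k \<and> is_clique E C}"

definition typeB_weight :: "('a \<times> 'a) set \<Rightarrow> nat \<Rightarrow> 'a set \<Rightarrow> real" where
  "typeB_weight E k S = real (card (kcliques E k S))"

definition density :: "('a set \<Rightarrow> real) \<Rightarrow> 'a set \<Rightarrow> real" where
  "density f S = f S / real (card S)"

definition peel_weight :: "('a set \<Rightarrow> real) \<Rightarrow> 'a set \<Rightarrow> 'a \<Rightarrow> real" where
  "peel_weight f S u = f S - f (S - {u})"

definition peel_step :: "('a set \<Rightarrow> real) \<Rightarrow> nat \<Rightarrow> real \<Rightarrow> 'a set \<Rightarrow> 'a set" where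
  "peel_step f k eps S = S - {u \<in> S. peel_weight f S u \<le> real k * (1 + eps) * density f S}"

text \<open>S_i; once empty it stays empty, so the algorithm's sets are exactly the nonempty S_i.\<close>
definition peel_iter :: "('a set \<Rightarrow> real) \<Rightarrow> nat \<Rightarrow> real \<Rightarrow> 'a set \<Rightarrow> nat \<Rightarrow> 'a set" where
  "peel_iter f k eps V i = (peel_step f k eps ^^ i) V"

end

theory Submission
  imports Defs
begin


lemma peel_iter_Suc: "peel_iter f k eps V (Suc i) = peel_step f k eps (peel_iter f k eps V i)"
  by (simp add: peel_iter_def)

lemma peel_iter_sub: "peel_iter f k eps V i \<subseteq> V"
  by (induction i) (auto simp: peel_iter_Suc peel_step_def peel_iter_def[of _ _ _ _ 0])

lemma abstract_thm:
  fixes V :: "'a set" and f :: "'a set \<Rightarrow> real"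
    and k :: nat and eps :: real and Sp Sstar :: "'a set"
  assumes finV: "finite V" and kpos: "k > 0"
    and P1: "f {} = 0"
    and P2: "\<And>S. S \<subseteq> V \<Longrightarrow> f S \<ge> 0"
    and P3: "\<And>T S u. T \<subseteq> S \<Longrightarrow> S \<subseteq> V \<Longrightarrow> u \<in> T \<Longrightarrow> peel_weight f T u \<le> peel_weight f S u"
    and P4: "\<And>S. S \<subseteq> V \<Longrightarrow> (\<Sum>u\<in>S. peel_weight f S u) \<le> real k * f S"
    and eps: "eps \<ge> 0"
    and Sp_max: "\<forall>i. peel_iter f k eps V i \<noteq> {} \<longrightarrow> density f (peel_iter f k eps V i) \<le> density f Sp"
    and Sstar: "Sstar \<subseteq> V" "Sstar \<noteq> {}"
    and Sstar_max: "\<forall>S. S \<subseteq> V \<and> S \<noteq> {} \<longrightarrow> density f S \<le> density f Sstar"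
  shows "density f Sp \<ge> density f Sstar / (real k * (1 + eps))"
proof -
  let ?S = "peel_iter f k eps V"
  let ?K = "real k * (1 + eps)"
  have Kpos: "?K > 0" using kpos eps by simp
  have strict: "card (?S (Suc i)) < card (?S i)" if ne: "?S i \<noteq> {}" for i
  proof -
    let ?T = "?S i"
    have sub: "?T \<subseteq> V" by (rule peel_iter_sub)
    have finT: "finite ?T" using finV sub finite_subset by blast
    have "\<exists>u\<in>?T. peel_weight f ?T u \<le> ?K * density f ?T"
    proof (rule ccontr)
      assume "\<not> ?thesis"
      hence lt: "\<forall>u\<in>?T. peel_weight f ?T u > ?K * density f ?T" by auto
      have dn: "density f ?T \<ge> 0" using P2[OF sub] by (simp add: density_def)
      have "?K * density f ?T \<ge> real k * density f ?T"
        using dn eps by (simp add: algebra_simps)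
      have "(\<Sum>u\<in>?T. ?K * density f ?T) < (\<Sum>u\<in>?T. peel_weight f ?T u)"
        by (rule sum_strict_mono) (use finT ne lt in auto)
      moreover have "(\<Sum>u\<in>?T. ?K * density f ?T) = real (card ?T) * ?K * density f ?T" by simp
      moreover have "real (card ?T) * density f ?T = f ?T"
        using finT ne by (simp add: density_def card_gt_0_iff)
      moreover have "real (card ?T) * ?K * density f ?T \<ge> real (card ?T) * (real k * density f ?T)"
        using \<open>?K * density f ?T \<ge> real k * density f ?T\<close>
        by (simp add: mult.assoc mult_left_mono)
      moreover have "real (card ?T) * (real k * density f ?T) = real k * f ?T"
        using \<open>real (card ?T) * density f ?T = f ?T\<close> by (metis mult.left_commute)
      ultimately show False using P4[OF sub] by linarith
    qed
    then obtain u where "u \<in> ?T" "peel_weight f ?T u \<le> ?K * density f ?T" by blast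
    hence "?S (Suc i) \<subseteq> ?T - {u}" by (auto simp: peel_iter_Suc peel_step_def)
    thus ?thesis using finT \<open>u \<in> ?T\<close>
      by (meson card_Diff1_less card_mono finite_Diff order_le_less_trans)
  qed
  have cnt: "?S i \<noteq> {} \<Longrightarrow> card (?S i) + i \<le> card V" for i
  proof (induction i)
    case 0 then show ?case by (simp add: peel_iter_def)
  next
    case (Suc i)
    have "?S (Suc i) \<subseteq> ?S i" by (auto simp: peel_iter_Suc peel_step_def)
    hence "?S i \<noteq> {}" using Suc.prems by blast
    then show ?case using Suc.IH strict[of i] by simp
  qed
  have ex: "\<exists>i. \<not> Sstar \<subseteq> ?S i"
  proof (rule ccontr)
    assume "\<not> ?thesis"
    hence "Sstar \<subseteq> ?S (Suc (card V))" by blast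
    hence "?S (Suc (card V)) \<noteq> {}" using Sstar by blast
    from cnt[OF this] show False by simp
  qed
  define i where "i = (LEAST i. \<not> Sstar \<subseteq> ?S i)"
  have i1: "\<not> Sstar \<subseteq> ?S i" unfolding i_def by (rule LeastI_ex[OF ex])
  have "i \<noteq> 0" using i1 Sstar by (auto simp: peel_iter_def)
  then obtain j where ij: "i = Suc j" by (cases i) auto
  have j1: "Sstar \<subseteq> ?S j" using not_less_Least[of j "\<lambda>i. \<not> Sstar \<subseteq> ?S i"] ij i_def by auto
  from i1 obtain u where u: "u \<in> Sstar" "u \<notin> ?S (Suc j)" using ij by blast
  have uj: "u \<in> ?S j" using u j1 by blast
  have rem: "peel_weight f (?S j) u \<le> ?K * density f (?S j)"
    using u(2) uj by (auto simp: peel_iter_Suc peel_step_def)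
  have nej: "?S j \<noteq> {}" using uj by blast
  have finS: "finite Sstar" using finV Sstar finite_subset by blast
  have gstar: "density f Sstar \<le> peel_weight f Sstar u"
  proof (cases "Sstar = {u}")
    case True then show ?thesis by (simp add: density_def peel_weight_def P1)
  next
    case False
    hence ne': "Sstar - {u} \<noteq> {}" using u by blast
    have "density f (Sstar - {u}) \<le> density f Sstar" 
      using Sstar_max ne' Sstar(1) by (metis Diff_subset order_trans)
    moreover have c: "card (Sstar - {u}) = card Sstar - 1" "card Sstar \<ge> 2"
    proof -
      show c1: "card (Sstar - {u}) = card Sstar - 1" using u finS by (simp add: card_Diff_singleton)
      have "card (Sstar - {u}) > 0" using ne' finS by (simp add: card_gt_0_iff)
      thus "card Sstar \<ge> 2" using c1 by linarith
    qed
    moreover have "f (Sstar - {u}) = density f (Sstar - {u}) * real (card (Sstar - {u}))"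
      using c by (simp add: density_def)
    moreover have "real (card (Sstar - {u})) = real (card Sstar) - 1" using c by simp
    ultimately have "f (Sstar - {u}) \<le> density f Sstar * (real (card Sstar) - 1)"
      by (metis mult_right_mono of_nat_0_le_iff)
    moreover have "f Sstar = density f Sstar * real (card Sstar)"
      using c by (simp add: density_def)
    ultimately show ?thesis by (simp add: peel_weight_def algebra_simps)
  qed
  have "density f Sstar \<le> ?K * density f (?S j)"
    using gstar P3[OF j1 peel_iter_sub u(1)] rem by linarith
  also have "\<dots> \<le> ?K * density f Sp" using Sp_max nej Kpos by (intro mult_left_mono) auto
  finally show ?thesis using Kpos by (simp add: pos_divide_le_eq mult.commute)
qed


lemma pwA:
  assumes "finite S" "finite E" "u \<in> S"
  shows "peel_weight (typeA_weight E a c) S u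
     = a u + (\<Sum>e\<in>E \<inter> (S \<times> S). if fst e = u \<or> snd e = u then c e else 0)"
proof -
  let ?P = "\<lambda>e. fst e = u \<or> snd e = u"
  have fin: "finite (E \<inter> (S \<times> S))" using assms by simp
  have s1: "(\<Sum>v\<in>S. a v) = a u + (\<Sum>v\<in>S - {u}. a v)" using assms by (simp add: sum.remove)
  have "(\<Sum>e\<in>E \<inter> (S \<times> S). c e) = (\<Sum>e\<in>E \<inter> (S \<times> S). (if ?P e then c e else 0) + (if \<not> ?P e then c e else 0))"
    by (rule sum.cong) auto
  also have "\<dots> = (\<Sum>e\<in>E \<inter> (S \<times> S). if ?P e then c e else 0) + (\<Sum>e\<in>E \<inter> (S \<times> S). if \<not> ?P e then c e else 0)"
    by (rule sum.distrib)
  also have "(\<Sum>e\<in>E \<inter> (S \<times> S). if \<not> ?P e then c e else 0) = (\<Sum>e\<in>{e\<in>E \<inter> (S \<times> S). \<not> ?P e}. c e)"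
    by (rule sum.inter_filter[symmetric, OF fin])
  also have "{e\<in>E \<inter> (S \<times> S). \<not> ?P e} = E \<inter> ((S - {u}) \<times> (S - {u}))" by auto
  finally show ?thesis using s1 by (simp add: peel_weight_def typeA_weight_def)
qed

lemma propsA:
  assumes finV: "finite V" and EV: "E \<subseteq> V \<times> V" and a: "\<forall>u\<in>V. a u \<ge> 0" and c: "\<forall>e\<in>E. c e \<ge> (0::real)"
  shows "typeA_weight E a c {} = 0"
    and "\<And>S. S \<subseteq> V \<Longrightarrow> typeA_weight E a c S \<ge> 0"
    and "\<And>T S u. T \<subseteq> S \<Longrightarrow> S \<subseteq> V \<Longrightarrow> u \<in> T \<Longrightarrow> peel_weight (typeA_weight E a c) T u \<le> peel_weight (typeA_weight E a c) S u"
    and "\<And>S. S \<subseteq> V \<Longrightarrow> (\<Sum>u\<in>S. peel_weight (typeA_weight E a c) S u) \<le> real 2 * typeA_weight E a c S"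
proof -
  have finE: "finite E" using finV EV finite_subset by blast
  show "typeA_weight E a c {} = 0" by (simp add: typeA_weight_def)
  show "typeA_weight E a c S \<ge> 0" if "S \<subseteq> V" for S
    unfolding typeA_weight_def using that a c
    by (intro add_nonneg_nonneg sum_nonneg) auto
  show "peel_weight (typeA_weight E a c) T u \<le> peel_weight (typeA_weight E a c) S u"
    if "T \<subseteq> S" "S \<subseteq> V" "u \<in> T" for T S u
  proof -
    have fS1: "finite S" using finite_subset[OF that(2) finV] .
    have fS: "finite S" "finite T" using fS1 finite_subset[OF that(1) fS1] by auto
    have "(\<Sum>e\<in>E \<inter> (T \<times> T). if fst e = u \<or> snd e = u then c e else 0)
        \<le> (\<Sum>e\<in>E \<inter> (S \<times> S). if fst e = u \<or> snd e = u then c e else 0)"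
      by (rule sum_mono2) (use fS finE that c in auto)
    moreover have "u \<in> S" using that by blast
    ultimately show ?thesis using pwA[OF fS(2) finE that(3), where a=a and c=c] pwA[OF fS(1) finE \<open>u \<in> S\<close>, where a=a and c=c] by linarith
  qed
  show "(\<Sum>u\<in>S. peel_weight (typeA_weight E a c) S u) \<le> real 2 * typeA_weight E a c S"
    if S: "S \<subseteq> V" for S
  proof -
    have fS: "finite S" using finite_subset[OF S finV] .
    let ?F = "E \<inter> (S \<times> S)"
    have fF: "finite ?F" using finE by simp
    have "(\<Sum>u\<in>S. peel_weight (typeA_weight E a c) S u)
       = (\<Sum>u\<in>S. a u + (\<Sum>e\<in>?F. if fst e = u \<or> snd e = u then c e else 0))"
      by (rule sum.cong) (use pwA fS finE in auto)
    also have "\<dots> = (\<Sum>u\<in>S. a u) + (\<Sum>u\<in>S. \<Sum>e\<in>?F. if fst e = u \<or> snd e = u then c e else 0)"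
      by (rule sum.distrib)
    also have "(\<Sum>u\<in>S. \<Sum>e\<in>?F. if fst e = u \<or> snd e = u then c e else 0)
       \<le> (\<Sum>u\<in>S. \<Sum>e\<in>?F. (if fst e = u then c e else 0) + (if snd e = u then c e else 0))"
      by (intro sum_mono) (use c in auto)
    also have "\<dots> = (\<Sum>e\<in>?F. \<Sum>u\<in>S. (if fst e = u then c e else 0) + (if snd e = u then c e else 0))"
      by (rule sum.swap)
    also have "\<dots> = (\<Sum>e\<in>?F. 2 * c e)"
    proof (rule sum.cong)
      fix e assume "e \<in> ?F"
      hence "fst e \<in> S" "snd e \<in> S" by auto
      thus "(\<Sum>u\<in>S. (if fst e = u then c e else 0) + (if snd e = u then c e else 0)) = 2 * c e"
        using fS by (simp add: sum.distrib)
    qed simp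
    finally have "(\<Sum>u\<in>S. peel_weight (typeA_weight E a c) S u) \<le> (\<Sum>u\<in>S. a u) + 2 * (\<Sum>e\<in>?F. c e)"
      by (simp add: sum_distrib_left)
    moreover have "(\<Sum>u\<in>S. a u) \<ge> 0" using a S by (intro sum_nonneg) auto
    ultimately show ?thesis by (simp add: typeA_weight_def)
  qed
qed


lemma kcl_fin: "finite S \<Longrightarrow> finite (kcliques E k S)"
  by (rule finite_subset[of _ "Pow S"]) (auto simp: kcliques_def)

lemma pwB:
  assumes "finite S"
  shows "peel_weight (typeB_weight E k) S u = real (card {C \<in> kcliques E k S. u \<in> C})"
proof -
  have eq: "kcliques E k S = {C \<in> kcliques E k S. u \<in> C} \<union> kcliques E k (S - {u})"
    by (auto simp: kcliques_def)
  have d: "{C \<in> kcliques E k S. u \<in> C} \<inter> kcliques E k (S - {u}) = {}"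
    by (auto simp: kcliques_def)
  have f1: "finite {C \<in> kcliques E k S. u \<in> C}" using kcl_fin[OF assms] by simp
  have f2: "finite (kcliques E k (S - {u}))" using kcl_fin[of "S - {u}"] assms by simp
  have "card (kcliques E k S) = card {C \<in> kcliques E k S. u \<in> C} + card (kcliques E k (S - {u}))"
    by (subst eq, rule card_Un_disjoint[OF f1 f2 d])
  thus ?thesis by (simp add: peel_weight_def typeB_weight_def)
qed

lemma propsB:
  assumes finV: "finite V" and k: "k \<ge> 3"
  shows "typeB_weight E k {} = 0"
    and "\<And>S. S \<subseteq> V \<Longrightarrow> typeB_weight E k S \<ge> 0"
    and "\<And>T S u. T \<subseteq> S \<Longrightarrow> S \<subseteq> V \<Longrightarrow> u \<in> T \<Longrightarrow> peel_weight (typeB_weight E k) T u \<le> peel_weight (typeB_weight E k) S u"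
    and "\<And>S. S \<subseteq> V \<Longrightarrow> (\<Sum>u\<in>S. peel_weight (typeB_weight E k) S u) \<le> real k * typeB_weight E k S"
proof -
  have "kcliques E k {} = {}" using k by (auto simp: kcliques_def)
  thus "typeB_weight E k {} = 0" by (simp add: typeB_weight_def)
  show "typeB_weight E k S \<ge> 0" for S by (simp add: typeB_weight_def)
  show "peel_weight (typeB_weight E k) T u \<le> peel_weight (typeB_weight E k) S u"
    if "T \<subseteq> S" "S \<subseteq> V" "u \<in> T" for T S u
  proof -
    have fS1: "finite S" using finite_subset[OF that(2) finV] .
    have fT: "finite T" using finite_subset[OF that(1) fS1] .
    have "{C \<in> kcliques E k T. u \<in> C} \<subseteq> {C \<in> kcliques E k S. u \<in> C}"
      using that(1) by (auto simp: kcliques_def)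
    hence "card {C \<in> kcliques E k T. u \<in> C} \<le> card {C \<in> kcliques E k S. u \<in> C}"
      by (rule card_mono[rotated]) (use kcl_fin[OF fS1] in simp)
    thus ?thesis by (simp add: pwB[OF fS1] pwB[OF fT])
  qed
  show "(\<Sum>u\<in>S. peel_weight (typeB_weight E k) S u) \<le> real k * typeB_weight E k S"
    if S: "S \<subseteq> V" for S
  proof -
    have fS: "finite S" using finite_subset[OF S finV] .
    let ?K = "kcliques E k S"
    have fK: "finite ?K" by (rule kcl_fin[OF fS])
    have "(\<Sum>u\<in>S. card {C \<in> ?K. u \<in> C}) = (\<Sum>u\<in>S. \<Sum>C\<in>?K. if u \<in> C then 1 else 0)"
      by (rule sum.cong) (simp_all add: sum.inter_filter[OF fK, symmetric])
    also have "\<dots> = (\<Sum>C\<in>?K. \<Sum>u\<in>S. if u \<in> C then 1 else 0)" by (rule sum.swap)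
    also have "\<dots> = (\<Sum>C\<in>?K. k)"
    proof (rule sum.cong)
      fix C assume C: "C \<in> ?K"
      have "(\<Sum>u\<in>S. if u \<in> C then 1 else (0::nat)) = card {u \<in> S. u \<in> C}"
        by (simp add: sum.inter_filter[OF fS, symmetric])
      also have "{u \<in> S. u \<in> C} = C" using C by (auto simp: kcliques_def)
      finally show "(\<Sum>u\<in>S. if u \<in> C then 1 else (0::nat)) = k" using C by (simp add: kcliques_def)
    qed simp
    finally have "(\<Sum>u\<in>S. card {C \<in> ?K. u \<in> C}) = k * card ?K" by simp
    hence "(\<Sum>u\<in>S. real (card {C \<in> ?K. u \<in> C})) = real k * real (card ?K)"
      by (metis of_nat_mult of_nat_sum)
    thus ?thesis by (simp add: pwB[OF fS] typeB_weight_def)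
  qed
qed

theorem theorem4p2:
  fixes V :: "'a set" and E :: "('a \<times> 'a) set" and f :: "'a set \<Rightarrow> real"
    and k :: nat and eps :: real and Sp Sstar :: "'a set"
  assumes finV: "finite V" and neV: "V \<noteq> {}" and EV: "E \<subseteq> V \<times> V"
    and weight: "(k = 2 \<and> (\<exists>a c. (\<forall>u\<in>V. a u \<ge> 0) \<and> (\<forall>e\<in>E. c e \<ge> 0) \<and> f = typeA_weight E a c))
               \<or> (k \<ge> 3 \<and> f = typeB_weight E k)"
    and eps: "eps \<ge> 0"
    and Sp_out: "\<exists>i. Sp = peel_iter f k eps V i \<and> Sp \<noteq> {}"
    and Sp_max: "\<forall>i. peel_iter f k eps V i \<noteq> {} \<longrightarrow> density f (peel_iter f k eps V i) \<le> density f Sp"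
    and Sstar: "Sstar \<subseteq> V" "Sstar \<noteq> {}"
    and Sstar_max: "\<forall>S. S \<subseteq> V \<and> S \<noteq> {} \<longrightarrow> density f S \<le> density f Sstar"
  shows "density f Sp \<ge> density f Sstar / (real k * (1 + eps))"
proof -
  have k0: "k > 0" using weight by auto
  from weight show ?thesis
  proof
    assume "k = 2 \<and> (\<exists>a c. (\<forall>u\<in>V. a u \<ge> 0) \<and> (\<forall>e\<in>E. c e \<ge> 0) \<and> f = typeA_weight E a c)"
    then obtain a c where k2: "k = 2" and a: "\<forall>u\<in>V. a u \<ge> 0" and c: "\<forall>e\<in>E. c e \<ge> 0"
      and fd: "f = typeA_weight E a c" by blast
    note P = propsA[OF finV EV a c]
    show ?thesis
      by (rule abstract_thm[OF finV k0]) (use P k2 fd eps Sp_max Sstar Sstar_max in auto)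
  next
    assume kb: "k \<ge> 3 \<and> f = typeB_weight E k"
    note P = propsB[OF finV, where k=k and E=E]
    show ?thesis
      by (rule abstract_thm[OF finV k0]) (use P kb eps Sp_max Sstar Sstar_max in auto)
  qed
qed

end
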